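(* Let $m,n$ be even positive integers and let $\mathcal{X}_0,\mathcal{X}_1\subseteq\{0,1\}^{2mn}$ be as defined in the context. Let $p$ be a real multilinear polynomial in $2mn$ variables such that $p(x)\neq 0$ for all $x\in\mathcal{X}_1$ and $p(x)=0$ for all $x\in\mathcal{X}_0$. Then $\deg(p)\geq \min(n/2,m/2)+1$.
   Context: For $z\in\{0,1\}^k$ let $w(z)$ denote its Hamming weight. Let $\mathcal{A}_1=\{0^m y : y\in\{0,1\}^m,\ m/2\le w(y)\le m\}$ and $\mathcal{A}_0=\{y0^m : y\in\{0,1\}^m,\ m/2\le w(y)\le m\}$ (subsets of $\{0,1\}^{2m}$). A string $x\in\{0,1\}^{2mn}$ is viewed as $n$ consecutive blocks of $2m$ bits, each block being $x^{(0,i)}x^{(1,i)}$ with $x^{(0,i)},x^{(1,i)}\in\{0,1\}^m$, $i=1,\dots,n$. Define $\mathcal{X}_1=\mathcal{A}_0\times\cdots\times\mathcal{A}_0$ ($n$ factors) and $\mathcal{X}_0=\bigcup\{\mathcal{A}_{y_1}\times\cdots\times\mathcal{A}_{y_n} : y\in\{0,1\}^n,\ w(y)=n/2\}$. A multilinear polynomial is $p(x)=\sum_{S\subseteq[N]}a_S\prod_{i\in S}x_i$ with real $a_S$; its degree is $\max\{|S|: a_S\neq 0\}$. *)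

theory Defs
  imports Complex_Main
begin

text \<open>Points of {0,1}^N are functions nat => bool, with coordinates 0..N-1 used
 (coordinates >= N are required to be False in the sets below).
 A multilinear polynomial in N variables is a coefficient function
 a :: nat set => real, supported on subsets of {..<N}.\<close>

definition ml_eval :: "nat \<Rightarrow> (nat set \<Rightarrow> real) \<Rightarrow> (nat \<Rightarrow> bool) \<Rightarrow> real" where
  "ml_eval N a x = (\<Sum>S\<in>Pow {..<N}. a S * (\<Prod>i\<in>S. of_bool (x i)))"

definition ml_degree :: "nat \<Rightarrow> (nat set \<Rightarrow> real) \<Rightarrow> nat" where
  "ml_degree N a = Max ({card S | S. S \<subseteq> {..<N} \<and> a S \<noteq> 0} \<union> {0})"

text \<open>Block i (0-based) occupies coordinates 2mi .. 2mi+2m-1;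
 x^(0,i) is coordinates 2mi+j, x^(1,i) is coordinates 2mi+m+j, j<m.
 in_A m b x i: block i of x lies in A_b.\<close>

definition in_A :: "nat \<Rightarrow> bool \<Rightarrow> (nat \<Rightarrow> bool) \<Rightarrow> nat \<Rightarrow> bool" where
  "in_A m b x i =
    (if b then (\<forall>j<m. \<not> x (2*m*i + j)) \<and> m \<le> 2 * card {j. j < m \<and> x (2*m*i + m + j)}
     else (\<forall>j<m. \<not> x (2*m*i + m + j)) \<and> m \<le> 2 * card {j. j < m \<and> x (2*m*i + j)})"

definition X1 :: "nat \<Rightarrow> nat \<Rightarrow> (nat \<Rightarrow> bool) set" where
  "X1 m n = {x. (\<forall>k\<ge>2*m*n. \<not> x k) \<and> (\<forall>i<n. in_A m False x i)}"

definition X0 :: "nat \<Rightarrow> nat \<Rightarrow> (nat \<Rightarrow> bool) set" where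
  "X0 m n = {x. (\<forall>k\<ge>2*m*n. \<not> x k) \<and>
     (\<exists>y :: nat \<Rightarrow> bool. 2 * card {i. i < n \<and> y i} = n \<and> (\<forall>i<n. in_A m (y i) x i))}"

end

theory Submission
  imports Defs
begin

definition flip :: "(nat \<Rightarrow> bool) \<Rightarrow> nat set \<Rightarrow> nat \<Rightarrow> bool" where
  "flip x W = (\<lambda>c. if c \<in> W then \<not> x c else x c)"

lemma flip_empty[simp]: "flip x {} = x"
  by (simp add: flip_def)

lemma fd_inner:
  assumes "finite Z" "finite S" "card S < card Z"
  shows "(\<Sum>W\<in>Pow Z. (-1::real)^card W * (\<Prod>i\<in>S. of_bool (flip x W i))) = 0"
proof -
  have "\<not> Z \<subseteq> S"
  proof
    assume "Z \<subseteq> S"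
    then have "card Z \<le> card S" by (rule card_mono[OF assms(2)])
    then show False using assms(3) by simp
  qed
  then obtain j where j: "j \<in> Z" "j \<notin> S" by blast
  define Z0 where "Z0 = Z - {j}"
  have Z: "Z = insert j Z0" "j \<notin> Z0" "finite Z0" using j assms(1) by (auto simp: Z0_def)
  let ?g = "\<lambda>W. (-1::real)^card W * (\<Prod>i\<in>S. of_bool (flip x W i))"
  have "sum ?g (Pow Z) = sum ?g (Pow Z0 \<union> insert j ` Pow Z0)"
    using Z by (simp add: Pow_insert)
  also have "\<dots> = sum ?g (Pow Z0) + sum ?g (insert j ` Pow Z0)"
    using Z by (intro sum.union_disjoint) auto
  also have "sum ?g (insert j ` Pow Z0) = sum (?g \<circ> insert j) (Pow Z0)"
  proof (rule sum.reindex)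
    show "inj_on (insert j) (Pow Z0)"
    proof (rule inj_onI)
      fix u v assume uv: "u \<in> Pow Z0" "v \<in> Pow Z0" "insert j u = insert j v"
      have "j \<notin> u" "j \<notin> v" using uv(1,2) Z(2) by auto
      then show "u = v" using uv(3) insert_ident by metis
    qed
  qed
  also have "sum (?g \<circ> insert j) (Pow Z0) = sum (\<lambda>W. - ?g W) (Pow Z0)"
  proof (rule sum.cong)
    fix W assume W: "W \<in> Pow Z0"
    have fW: "finite W" using W Z(3) finite_subset by auto
    have jW: "j \<notin> W" using W Z by auto
    have "(\<Prod>i\<in>S. of_bool (flip x (insert j W) i)) = (\<Prod>i\<in>S. (of_bool (flip x W i)::real))"
      using j(2) by (intro prod.cong) (auto simp: flip_def)
    then show "(?g \<circ> insert j) W = - ?g W" using fW jW by simp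
  qed simp
  finally show ?thesis by (simp add: sum_negf)
qed

lemma fd:
  fixes a :: "nat set \<Rightarrow> real"
  assumes deg: "\<And>S. a S \<noteq> 0 \<Longrightarrow> card S \<le> k" and fin: "finite Z" and cz: "card Z > k"
  shows "(\<Sum>W\<in>Pow Z. (-1)^card W * ml_eval N a (flip x W)) = 0"
proof -
  have "(\<Sum>W\<in>Pow Z. (-1)^card W * ml_eval N a (flip x W))
      = (\<Sum>W\<in>Pow Z. \<Sum>S\<in>Pow {..<N}. a S * ((-1)^card W * (\<Prod>i\<in>S. of_bool (flip x W i))))"
    unfolding ml_eval_def sum_distrib_left by (intro sum.cong refl) (simp add: mult.left_commute)
  also have "\<dots> = (\<Sum>S\<in>Pow {..<N}. \<Sum>W\<in>Pow Z. a S * ((-1)^card W * (\<Prod>i\<in>S. of_bool (flip x W i))))"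
    by (rule sum.swap)
  also have "\<dots> = (\<Sum>S\<in>Pow {..<N}. a S * (\<Sum>W\<in>Pow Z. (-1)^card W * (\<Prod>i\<in>S. of_bool (flip x W i))))"
    by (simp add: sum_distrib_left)
  also have "\<dots> = 0"
  proof (rule sum.neutral, rule ballI)
    fix S assume S: "S \<in> Pow {..<N}"
    show "a S * (\<Sum>W\<in>Pow Z. (-1)^card W * (\<Prod>i\<in>S. of_bool (flip x W i))) = 0"
    proof (cases "a S = 0")
      case False
      then have "card S < card Z" using deg cz by (meson le_less_trans)
      moreover have "finite S" using S finite_subset by auto
      ultimately show ?thesis using fd_inner fin by simp
    qed simp
  qed
  finally show ?thesis .
qed

lemma spread:
  fixes a :: "nat set \<Rightarrow> real" and \<mu> :: "(nat \<Rightarrow> bool) \<Rightarrow> nat"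
  assumes deg: "\<And>S. a S \<noteq> 0 \<Longrightarrow> card S \<le> k"
  and step: "\<And>x. R x \<Longrightarrow> ml_eval N a x = 0 \<or> (\<exists>Z. finite Z \<and> card Z > k \<and>
      (\<forall>W\<subseteq>Z. W \<noteq> {} \<longrightarrow> R (flip x W) \<and> \<mu> (flip x W) < \<mu> x))"
  shows "R x \<Longrightarrow> ml_eval N a x = 0"
proof (induction "\<mu> x" arbitrary: x rule: less_induct)
  case less
  from step[OF less.prems] show ?case
  proof
    assume "\<exists>Z. finite Z \<and> card Z > k \<and>
      (\<forall>W\<subseteq>Z. W \<noteq> {} \<longrightarrow> R (flip x W) \<and> \<mu> (flip x W) < \<mu> x)"
    then obtain Z where Z: "finite Z" "card Z > k"
      "\<And>W. W \<subseteq> Z \<Longrightarrow> W \<noteq> {} \<Longrightarrow> R (flip x W) \<and> \<mu> (flip x W) < \<mu> x" by blast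
    let ?g = "\<lambda>W. (-1::real)^card W * ml_eval N a (flip x W)"
    have "sum ?g (Pow Z) = 0" by (rule fd[OF deg Z(1) Z(2)])
    moreover have "sum ?g (Pow Z) = ?g {} + sum ?g (Pow Z - {{}})"
      using Z(1) by (intro sum.remove) auto
    moreover have "sum ?g (Pow Z - {{}}) = 0"
    proof (rule sum.neutral, rule ballI)
      fix W assume "W \<in> Pow Z - {{}}"
      then have "R (flip x W) \<and> \<mu> (flip x W) < \<mu> x" using Z(3) by auto
      then show "?g W = 0" using less.hyps by auto
    qed
    ultimately show ?thesis by simp
  qed
qed


lemma dm:
  fixes j m i :: nat
  assumes "j < 2*m"
  shows "(2*m*i + j) div (2*m) = i" "(2*m*i + j) mod (2*m) = j"
proof -
  have nz: "2*m \<noteq> 0" using assms by simp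
  have e: "2*m*i + j = j + i*(2*m)" by (simp add: mult.commute)
  show "(2*m*i + j) div (2*m) = i" unfolding e using nz assms by (simp add: div_mult_self1)
  show "(2*m*i + j) mod (2*m) = j" unfolding e using nz assms by (simp add: mod_mult_self1)
qed

lemma blt:
  fixes i n j m :: nat
  assumes "i < n" "j < 2*m"
  shows "2*m*i + j < 2*m*n"
proof -
  have "2*m*i + j < 2*m*i + 2*m" using assms by simp
  also have "\<dots> = 2*m*(i+1)" by simp
  also have "\<dots> \<le> 2*m*n" using assms(1) by (intro mult_le_mono2) simp
  finally show ?thesis .
qed

lemma card_split: "card {j. j < m \<and> P j} + card {j. j < m \<and> \<not> P j} = (m::nat)"
proof -
  have "{..<m} = {j. j < m \<and> P j} \<union> {j. j < m \<and> \<not> P j}" by auto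
  then have "card {..<m} = card ({j. j < m \<and> P j} \<union> {j. j < m \<and> \<not> P j})" by simp
  also have "\<dots> = card {j. j < m \<and> P j} + card {j. j < m \<and> \<not> P j}"
    by (rule card_Un_disjoint) auto
  finally show ?thesis by simp
qed


theorem lemma2:
  fixes m n :: nat and a :: "nat set \<Rightarrow> real"
  assumes "even m" "even n" "m > 0" "n > 0"
    and "\<And>S. \<not> S \<subseteq> {..<2*m*n} \<Longrightarrow> a S = 0"
    and "\<And>x. x \<in> X1 m n \<Longrightarrow> ml_eval (2*m*n) a x \<noteq> 0"
    and "\<And>x. x \<in> X0 m n \<Longrightarrow> ml_eval (2*m*n) a x = 0"
  shows "ml_degree (2*m*n) a \<ge> min (n div 2) (m div 2) + 1"
proof (rule ccontr)
  define N where "N = 2*m*n"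
  define k where "k = min (n div 2) (m div 2)"
  assume "\<not> ?thesis"
  then have dle: "ml_degree N a \<le> k" unfolding N_def k_def by (auto simp: min_def split: if_splits)
  have deg: "card S \<le> k" if "a S \<noteq> 0" for S
  proof -
    have S: "S \<subseteq> {..<N}" using assms(5) that unfolding N_def by blast
    have "{card S | S. S \<subseteq> {..<N} \<and> a S \<noteq> 0} \<subseteq> card ` Pow {..<N}" by auto
    then have "finite ({card S | S. S \<subseteq> {..<N} \<and> a S \<noteq> 0} \<union> {0})"
      using finite_subset by auto
    moreover have "card S \<in> {card S | S. S \<subseteq> {..<N} \<and> a S \<noteq> 0} \<union> {0}"
      using S that by auto
    ultimately have "card S \<le> ml_degree N a" unfolding ml_degree_def by (rule Max_ge)
    then show ?thesis using dle by simp
  qed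
  define act where "act D = {c. c < N \<and> (c mod (2*m) < m \<longleftrightarrow> c div (2*m) \<notin> D)}" for D
  have finact: "finite (act D)" for D unfolding act_def by auto
  have st1: "ml_eval N a x = 0" if D: "D \<subseteq> {..<n}" "card D = n div 2"
      and sup: "\<forall>c. x c \<longrightarrow> c \<in> act D" for D x
  proof (rule spread[where k=k and R="\<lambda>x. \<forall>c. x c \<longrightarrow> c \<in> act D"
        and \<mu>="\<lambda>x. card {c \<in> act D. \<not> x c}", OF deg])
    show "\<forall>c. x c \<longrightarrow> c \<in> act D" by fact
  next
    fix x assume R: "\<forall>c. x c \<longrightarrow> c \<in> act D"
    have half: "\<exists>Z. finite Z \<and> card Z > k \<and> (\<forall>W\<subseteq>Z. W \<noteq> {} \<longrightarrow>
          (\<forall>c. flip x W c \<longrightarrow> c \<in> act D) \<and> card {c \<in> act D. \<not> flip x W c} < card {c \<in> act D. \<not> x c})"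
      if hin: "\<And>j. j < m \<Longrightarrow> 2*m*i + h + j \<in> act D"
        and small: "\<not> m \<le> 2 * card {j. j < m \<and> x (2*m*i + h + j)}" for i h
    proof -
      define Z where "Z = (\<lambda>j. 2*m*i + h + j) ` {j. j < m \<and> \<not> x (2*m*i + h + j)}"
      have "card Z = card {j. j < m \<and> \<not> x (2*m*i + h + j)}"
        unfolding Z_def by (rule card_image) (simp add: inj_on_def)
      moreover have "card {j. j < m \<and> x (2*m*i + h + j)} + card {j. j < m \<and> \<not> x (2*m*i + h + j)} = m"
        by (rule card_split)
      ultimately have "card Z > k" using small unfolding k_def by linarith
      moreover have "finite Z" unfolding Z_def by auto
      moreover have "Z \<subseteq> act D" "\<forall>z\<in>Z. \<not> x z" unfolding Z_def using hin by auto
      have key: "(\<forall>c. flip x W c \<longrightarrow> c \<in> act D) \<and> card {c \<in> act D. \<not> flip x W c} < card {c \<in> act D. \<not> x c}"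
        if W: "W \<subseteq> Z" "W \<noteq> {}" for W
      proof
        show "\<forall>c. flip x W c \<longrightarrow> c \<in> act D" using R W \<open>Z \<subseteq> act D\<close> by (auto simp: flip_def)
        obtain w where w: "w \<in> W" using W by blast
        have sub: "{c \<in> act D. \<not> flip x W c} \<subseteq> {c \<in> act D. \<not> x c}"
          using W \<open>\<forall>z\<in>Z. \<not> x z\<close> by (auto simp: flip_def)
        have "w \<in> {c \<in> act D. \<not> x c}" "w \<notin> {c \<in> act D. \<not> flip x W c}"
          using w W \<open>Z \<subseteq> act D\<close> \<open>\<forall>z\<in>Z. \<not> x z\<close> by (auto simp: flip_def)
        then have "{c \<in> act D. \<not> flip x W c} \<subset> {c \<in> act D. \<not> x c}" using sub by blast
        then show "card {c \<in> act D. \<not> flip x W c} < card {c \<in> act D. \<not> x c}"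
          by (rule psubset_card_mono[rotated]) (simp add: finact)
      qed
      show ?thesis using key \<open>card Z > k\<close> \<open>finite Z\<close> by blast
    qed
    show "ml_eval N a x = 0 \<or> (\<exists>Z. finite Z \<and> card Z > k \<and> (\<forall>W\<subseteq>Z. W \<noteq> {} \<longrightarrow>
          (\<forall>c. flip x W c \<longrightarrow> c \<in> act D) \<and> card {c \<in> act D. \<not> flip x W c} < card {c \<in> act D. \<not> x c}))"
    proof (cases "\<forall>i<n. in_A m (i \<in> D) x i")
      case True
      have "x \<in> X0 m n"
        unfolding X0_def
      proof (intro CollectI conjI allI impI exI)
        show "\<not> x c" if "c \<ge> 2*m*n" for c using R that unfolding act_def N_def by auto
        have "{i. i < n \<and> i \<in> D} = D" using D by auto
        then show "2 * card {i. i < n \<and> i \<in> D} = n" using D assms(2) by simp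
        show "in_A m (i \<in> D) x i" if "i < n" for i using True that by simp
      qed
      then show ?thesis using assms(7) unfolding N_def by simp
    next
      case False
      then obtain i where i: "i < n" "\<not> in_A m (i \<in> D) x i" by blast
      show ?thesis
      proof (cases "i \<in> D")
        case True
        have z: "\<not> x (2*m*i + j)" if "j < m" for j
        proof
          assume "x (2*m*i + j)"
          then have "2*m*i + j \<in> act D" using R by blast
          moreover have "(2*m*i + j) div (2*m) = i" "(2*m*i + j) mod (2*m) = j"
            using dm[of j m i] that by auto
          ultimately show False using True that unfolding act_def by auto
        qed
        have small: "\<not> m \<le> 2 * card {j. j < m \<and> x (2*m*i + m + j)}"
          using i True z unfolding in_A_def by auto
        have hin: "2*m*i + m + j \<in> act D" if "j < m" for j
        proof -
          have "(2*m*i + (m + j)) div (2*m) = i" "(2*m*i + (m+j)) mod (2*m) = m + j"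
            using dm[of "m+j" m i] that by auto
          moreover have "2*m*i + (m+j) < 2*m*n" using blt[of i n "m+j" m] i that by auto
          ultimately show ?thesis using True unfolding act_def N_def by (auto simp: add.assoc)
        qed
        show ?thesis using half[OF hin small] by blast
      next
        case False
        have z: "\<not> x (2*m*i + m + j)" if "j < m" for j
        proof
          assume "x (2*m*i + m + j)"
          then have "2*m*i + (m + j) \<in> act D" using R by (simp add: add.assoc)
          moreover have "(2*m*i + (m + j)) div (2*m) = i" "(2*m*i + (m+j)) mod (2*m) = m + j"
            using dm[of "m+j" m i] that by auto
          ultimately show False using False that unfolding act_def by auto
        qed
        have small: "\<not> m \<le> 2 * card {j. j < m \<and> x (2*m*i + 0 + j)}"
          using i False z unfolding in_A_def by auto
        have hin: "2*m*i + 0 + j \<in> act D" if "j < m" for j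
        proof -
          have "(2*m*i + j) div (2*m) = i" "(2*m*i + j) mod (2*m) = j"
            using dm[of "j" m i] that by auto
          moreover have "2*m*i + j < 2*m*n" using blt[of i n "j" m] i that by auto
          ultimately show ?thesis using False that unfolding act_def N_def by auto
        qed
        show ?thesis using half[OF hin small] by blast
      qed
    qed
  qed
  define R2 where "R2 x = (\<forall>c. x c \<longrightarrow> c < N \<and> c mod (2*m) < m)" for x
  have st2: "ml_eval N a x = 0" if "R2 x" for x
  proof (rule spread[where k=k and R=R2 and \<mu>="\<lambda>x. card {c. c < N \<and> x c}", OF deg])
    show "R2 x" by fact
  next
    fix x assume R: "R2 x"
    define B where "B = {i. i < n \<and> (\<exists>j<m. x (2*m*i + j))}"
    have finB: "finite B" unfolding B_def by auto
    show "ml_eval N a x = 0 \<or> (\<exists>Z. finite Z \<and> card Z > k \<and> (\<forall>W\<subseteq>Z. W \<noteq> {} \<longrightarrow>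
          R2 (flip x W) \<and> card {c. c < N \<and> flip x W c} < card {c. c < N \<and> x c}))"
    proof (cases "card B \<le> n div 2")
      case True
      have Bsub: "B \<subseteq> {..<n}" unfolding B_def by blast
      have "card ({..<n} - B) = n - card B"
        using card_Diff_subset[OF finB Bsub] by simp
      then have "n div 2 \<le> card ({..<n} - B)" using True by simp
      then obtain D where D: "D \<subseteq> {..<n} - B" "card D = n div 2"
        by (meson obtain_subset_with_card_n)
      have "\<forall>c. x c \<longrightarrow> c \<in> act D"
      proof (intro allI impI)
        fix c assume xc: "x c"
        then have c: "c < N" "c mod (2*m) < m" using R unfolding R2_def by auto
        have "c div (2*m) < n"
          using c(1) assms(3) unfolding N_def by (simp add: div_less_iff_less_mult mult.commute)
        moreover have "x (2*m*(c div (2*m)) + c mod (2*m))" using xc by simp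
        ultimately have "c div (2*m) \<in> B" unfolding B_def using c(2) by blast
        then show "c \<in> act D" using c D unfolding act_def by auto
      qed
      then have "ml_eval N a x = 0" using st1 D by blast
      then show ?thesis by blast
    next
      case False
      define sel where "sel i = (SOME j. j < m \<and> x (2*m*i + j))" for i
      have sel: "sel i < m \<and> x (2*m*i + sel i)" if iB: "i \<in> B" for i
      proof -
        obtain j where "j < m \<and> x (2*m*i + j)" using iB unfolding B_def by blast
        then show ?thesis unfolding sel_def by (rule someI)
      qed
      define Z where "Z = (\<lambda>i. 2*m*i + sel i) ` B"
      have "inj_on (\<lambda>i. 2*m*i + sel i) B"
      proof (rule inj_onI)
        fix i i' assume "i \<in> B" "i' \<in> B" "2*m*i + sel i = 2*m*i' + sel i'"
        moreover have "sel i < 2*m" "sel i' < 2*m" using sel \<open>i \<in> B\<close> \<open>i' \<in> B\<close> by force+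
        ultimately have d1: "(2*m*i + sel i) div (2*m) = i" and d2: "(2*m*i' + sel i') div (2*m) = i'"
          using dm(1) by blast+
        have "(2*m*i + sel i) div (2*m) = (2*m*i' + sel i') div (2*m)"
          using \<open>2*m*i + sel i = 2*m*i' + sel i'\<close> by (rule arg_cong)
        then show "i = i'" using d1 d2 by metis
      qed
      then have "card Z = card B" unfolding Z_def by (rule card_image)
      then have "card Z > k" using False unfolding k_def by linarith
      moreover have "finite Z" unfolding Z_def using finB by auto
      moreover have Zx: "\<forall>z\<in>Z. x z" unfolding Z_def using sel by auto
      have key: "R2 (flip x W) \<and> card {c. c < N \<and> flip x W c} < card {c. c < N \<and> x c}"
        if W: "W \<subseteq> Z" "W \<noteq> {}" for W
      proof
        show "R2 (flip x W)" using R W Zx unfolding R2_def by (auto simp: flip_def)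
        obtain w where w: "w \<in> W" using W by blast
        have sub: "{c. c < N \<and> flip x W c} \<subseteq> {c. c < N \<and> x c}"
          using W Zx by (auto simp: flip_def)
        have "x w" "w < N" using w W Zx R unfolding R2_def by auto
        then have "w \<in> {c. c < N \<and> x c}" "w \<notin> {c. c < N \<and> flip x W c}"
          using w by (auto simp: flip_def)
        then have "{c. c < N \<and> flip x W c} \<subset> {c. c < N \<and> x c}" using sub by blast
        then show "card {c. c < N \<and> flip x W c} < card {c. c < N \<and> x c}"
          by (rule psubset_card_mono[rotated]) simp
      qed
      show ?thesis using key \<open>card Z > k\<close> \<open>finite Z\<close> by blast
    qed
  qed
  define xs where "xs = (\<lambda>c. c < N \<and> c mod (2*m) < m)"
  have "xs \<in> X1 m n"
    unfolding X1_def
  proof (intro CollectI conjI allI impI)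
    show "\<not> xs c" if "c \<ge> 2*m*n" for c using that unfolding xs_def N_def by simp
    fix i assume i: "i < n"
    have r: "\<not> xs (2*m*i + m + j)" if "j < m" for j
    proof -
      have "(2*m*i + (m+j)) mod (2*m) = m + j" using dm(2)[of "m+j" m i] that by simp
      then have "\<not> xs (2*m*i + (m+j))" unfolding xs_def by simp
      then show ?thesis by (simp add: add.assoc)
    qed
    have "{j. j < m \<and> xs (2*m*i + j)} = {..<m}"
    proof (intro set_eqI iffI)
      fix j assume "j \<in> {..<m}"
      then have j: "j < m" by simp
      have "(2*m*i + j) mod (2*m) = j" using dm(2)[of j m i] j by simp
      moreover have "2*m*i + j < N" using blt[of i n j m] i j unfolding N_def by simp
      ultimately show "j \<in> {j. j < m \<and> xs (2*m*i + j)}" using j unfolding xs_def by simp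
    qed simp
    then show "in_A m False xs i" using r unfolding in_A_def by simp
  qed
  moreover have "R2 xs" unfolding R2_def xs_def by simp
  ultimately show False using st2 assms(6) unfolding N_def by blast
qed

end
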